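(* Let $O=(U,\prec)$ be a CvT order on a finite set of operations $U=C\cup T$, $C\cap T=\varnothing$. Suppose that for every Cv-set $C_i$ and all $p,q\in C_i$, the operations $p$ and $q$ commute. Then every LAC system for $O$ is state convergent, i.e. for any two linear extensions $O_i=(U,<_i)$ and $O_j=(U,<_j)$ of $O$ we have $S(O_i)=S(O_j)$.
   Context: Operations are modeled as state transformers: there is a set of states $\Sigma$, an initial state $s_0\in\Sigma$, and each operation $u\in U$ is a function $u:\Sigma\to\Sigma$. For a linear order (sequence) $u_1<u_2<\dots<u_n$ of $U$, its resulting state is $S=u_n(\cdots u_2(u_1(s_0))\cdots)$. Two operations $p,q$ commute if $p\circ q=q\circ p$. A CvT order is a strict partial order $O=(U,\prec)$ on $U=C\cup T$ ($C\cap T=\varnothing$) such that (i) any two distinct $u,v\in T$ are comparable ($u\prec v$ or $v\prec u$), and (ii) every $p\in C$ and $u\in T$ are comparable ($p\prec u$ or $u\prec p$). A Cv-set is a subset $C_i\subseteq C$ such that (a) any two elements of $C_i$ are incomparable under $\prec$, and (b) every $p\in C\setminus C_i$ is comparable to some $q\in C_i$. A replicated system provides local atomic consistency (LAC) if each site applies the operations of $U$ according to some linear extension of the CvT order. An LAC system is state convergent if all linear extensions of the underlying CvT order yield the same resulting state. *)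

theory Defs
  imports Main
begin

(* Operations are labels of type 'u; each label u denotes the state transformer
   app u :: 's => 's. prec is the (strict) order relation of the CvT order on U. *)

definition strict_po_on :: "'u set \<Rightarrow> ('u \<Rightarrow> 'u \<Rightarrow> bool) \<Rightarrow> bool" where
  "strict_po_on U prec \<longleftrightarrow>
     (\<forall>x. \<forall>y. prec x y \<longrightarrow> x \<in> U \<and> y \<in> U) \<and>
     (\<forall>x\<in>U. \<not> prec x x) \<and>
     (\<forall>x\<in>U. \<forall>y\<in>U. \<forall>z\<in>U. prec x y \<longrightarrow> prec y z \<longrightarrow> prec x z)"

definition comparable :: "('u \<Rightarrow> 'u \<Rightarrow> bool) \<Rightarrow> 'u \<Rightarrow> 'u \<Rightarrow> bool" where
  "comparable prec u v \<longleftrightarrow> prec u v \<or> prec v u"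

definition CvT_order :: "'u set \<Rightarrow> 'u set \<Rightarrow> ('u \<Rightarrow> 'u \<Rightarrow> bool) \<Rightarrow> bool" where
  "CvT_order C T prec \<longleftrightarrow>
     C \<inter> T = {} \<and> strict_po_on (C \<union> T) prec \<and>
     (\<forall>u\<in>T. \<forall>v\<in>T. u \<noteq> v \<longrightarrow> comparable prec u v) \<and>
     (\<forall>p\<in>C. \<forall>u\<in>T. comparable prec p u)"

definition Cv_set :: "'u set \<Rightarrow> ('u \<Rightarrow> 'u \<Rightarrow> bool) \<Rightarrow> 'u set \<Rightarrow> bool" where
  "Cv_set C prec Ci \<longleftrightarrow>
     Ci \<subseteq> C \<and>
     (\<forall>p\<in>Ci. \<forall>q\<in>Ci. \<not> comparable prec p q) \<and>
     (\<forall>p\<in>C - Ci. \<exists>q\<in>Ci. comparable prec p q)"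

definition commute :: "('s \<Rightarrow> 's) \<Rightarrow> ('s \<Rightarrow> 's) \<Rightarrow> bool" where
  "commute f g \<longleftrightarrow> f \<circ> g = g \<circ> f"

definition linear_extension :: "'u set \<Rightarrow> ('u \<Rightarrow> 'u \<Rightarrow> bool) \<Rightarrow> 'u list \<Rightarrow> bool" where
  "linear_extension U prec xs \<longleftrightarrow>
     distinct xs \<and> set xs = U \<and>
     (\<forall>i<length xs. \<forall>j<length xs. prec (xs ! i) (xs ! j) \<longrightarrow> i < j)"

(* Resulting state u_n(...u_1(s0)...) : the first list element is applied first. *)
definition result_state :: "('u \<Rightarrow> 's \<Rightarrow> 's) \<Rightarrow> 's \<Rightarrow> 'u list \<Rightarrow> 's" where
  "result_state app s0 xs = fold app xs s0"

end

theory Submission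
  imports Defs
begin

lemma fold_comm_move:
  assumes "\<forall>y\<in>set ys. commute (app x) (app y)"
  shows "app x \<circ> fold app ys = fold app ys \<circ> app x"
  using assms
proof (induction ys)
  case Nil then show ?case by simp
next
  case (Cons y ys)
  have "\<forall>y\<in>set ys. commute (app x) (app y)" using Cons.prems by simp
  then have h: "app x \<circ> fold app ys = fold app ys \<circ> app x" by (rule Cons.IH)
  have c: "app x \<circ> app y = app y \<circ> app x" using Cons.prems by (simp add: commute_def)
  have "app x \<circ> fold app (y # ys) = (app x \<circ> fold app ys) \<circ> app y" by (simp add: comp_assoc)
  also have "\<dots> = fold app ys \<circ> (app x \<circ> app y)" by (simp add: h comp_assoc)
  also have "\<dots> = fold app (y # ys) \<circ> app x" by (simp add: c comp_assoc)
  finally show ?case .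
qed

lemma main:
  assumes "distinct xs" "distinct ys" "set xs = set ys"
    "sorted_wrt R xs" "sorted_wrt R ys"
    "\<forall>x\<in>set xs. \<forall>y\<in>set xs. x \<noteq> y \<longrightarrow> R x y \<longrightarrow> R y x \<longrightarrow> commute (app x) (app y)"
  shows "fold app xs = fold app ys"
  using assms
proof (induction xs arbitrary: ys)
  case Nil then show ?case by simp
next
  case (Cons x xs)
  have "x \<in> set ys" using Cons.prems(3) by auto
  then obtain ys1 ys2 where ys: "ys = ys1 @ x # ys2" by (meson split_list)
  have d: "distinct (ys1 @ ys2)" "x \<notin> set ys1" "x \<notin> set ys2" using Cons.prems(2) ys by auto
  have se: "set xs = set (ys1 @ ys2)" using Cons.prems(1,3) ys d by auto
  have s1: "sorted_wrt R (ys1 @ ys2)" using Cons.prems(5) ys by (auto simp: sorted_wrt_append)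
  have r1: "\<forall>y\<in>set ys1. R y x" using Cons.prems(5) ys by (auto simp: sorted_wrt_append)
  have r2: "\<forall>y\<in>set xs. R x y" using Cons.prems(4) by auto
  have "\<forall>y\<in>set ys1. commute (app x) (app y)"
  proof
    fix y assume y: "y \<in> set ys1"
    then have "y \<in> set xs" using se by auto
    then show "commute (app x) (app y)" using Cons.prems(6) r1 r2 y d by auto
  qed
  then have cm: "app x \<circ> fold app ys1 = fold app ys1 \<circ> app x" by (rule fold_comm_move)
  have ih: "fold app xs = fold app (ys1 @ ys2)"
    using Cons.IH[of "ys1 @ ys2"] Cons.prems d se s1 by auto
  have "fold app ys = fold app ys2 \<circ> (app x \<circ> fold app ys1)" using ys by (simp add: comp_assoc)
  also have "\<dots> = fold app (ys1 @ ys2) \<circ> app x" by (simp add: cm comp_assoc)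
  also have "\<dots> = fold app (x # xs)" by (simp add: ih)
  finally show ?case by simp
qed

lemma le_sorted:
  assumes "linear_extension U prec xs"
  shows "sorted_wrt (\<lambda>a b. \<not> prec b a) xs"
  unfolding sorted_wrt_iff_nth_less
proof (intro allI impI)
  fix i j assume ij: "i < j" "j < length xs"
  show "\<not> prec (xs ! j) (xs ! i)"
  proof
    assume "prec (xs ! j) (xs ! i)"
    then have "j < i" using assms ij unfolding linear_extension_def by auto
    then show False using ij by simp
  qed
qed

theorem theorem1:
  fixes C T :: "'u set" and prec :: "'u \<Rightarrow> 'u \<Rightarrow> bool"
    and app :: "'u \<Rightarrow> 's \<Rightarrow> 's" and s0 :: 's
  assumes "finite (C \<union> T)"
    and "CvT_order C T prec"
    and "\<And>Ci p q. Cv_set C prec Ci \<Longrightarrow> p \<in> Ci \<Longrightarrow> q \<in> Ci \<Longrightarrow> commute (app p) (app q)"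
    and "linear_extension (C \<union> T) prec xs"
    and "linear_extension (C \<union> T) prec ys"
  shows "result_state app s0 xs = result_state app s0 ys"
proof -
  have irr: "\<forall>x\<in>C \<union> T. \<not> prec x x" using assms(2) unfolding CvT_order_def strict_po_on_def by blast
  have com: "commute (app x) (app y)"
    if xy: "x \<in> C \<union> T" "y \<in> C \<union> T" "x \<noteq> y" "\<not> prec x y" "\<not> prec y x" for x y
  proof -
    have ct: "C \<inter> T = {}" "\<forall>u\<in>T. \<forall>v\<in>T. u \<noteq> v \<longrightarrow> comparable prec u v"
      "\<forall>p\<in>C. \<forall>u\<in>T. comparable prec p u"
      using assms(2) unfolding CvT_order_def by blast+
    have xC: "x \<in> C"
    proof (rule ccontr)
      assume "x \<notin> C" then have "x \<in> T" using xy by auto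
      then have "comparable prec x y" using ct xy(2,3) unfolding comparable_def by (cases "y \<in> T") auto
      then show False using xy unfolding comparable_def by auto
    qed
    have yC: "y \<in> C"
    proof (rule ccontr)
      assume "y \<notin> C" then have "y \<in> T" using xy by auto
      then have "comparable prec x y" using ct xC unfolding comparable_def by auto
      then show False using xy unfolding comparable_def by auto
    qed
    define S where "S = {A. A \<subseteq> C \<and> {x, y} \<subseteq> A \<and> (\<forall>p\<in>A. \<forall>q\<in>A. \<not> comparable prec p q)}"
    have fC: "finite C" using assms(1) by auto
    have "S \<subseteq> Pow C" unfolding S_def by auto
    then have fS: "finite S" using fC by (simp add: finite_subset)
    have xyS: "{x, y} \<in> S" unfolding S_def comparable_def using xC yC xy irr by auto
    then have ne: "S \<noteq> {}" by auto
    have "Max (card ` S) \<in> card ` S" using fS ne by simp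
    then obtain A where AS: "A \<in> S" and cA: "card A = Max (card ` S)" by auto
    have "Cv_set C prec A"
      unfolding Cv_set_def
    proof (intro conjI ballI)
      show "A \<subseteq> C" using AS S_def by auto
    next
      fix p q assume "p \<in> A" "q \<in> A" then show "\<not> comparable prec p q" using AS S_def by auto
    next
      fix p assume p: "p \<in> C - A"
      show "\<exists>q\<in>A. comparable prec p q"
      proof (rule ccontr)
        assume nc: "\<not> (\<exists>q\<in>A. comparable prec p q)"
        have "insert p A \<in> S" using AS p nc irr unfolding S_def comparable_def by auto
        then have "card (insert p A) \<le> Max (card ` S)" using fS by simp
        moreover have "finite A" using AS S_def fC finite_subset by auto
        ultimately show False using cA p by simp
      qed
    qed
    moreover have "x \<in> A" "y \<in> A" using AS S_def by auto
    ultimately show ?thesis using assms(3) by blast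
  qed
  have "fold app xs = fold app ys"
  proof (rule main[where R = "\<lambda>a b. \<not> prec b a"])
    show "distinct xs" "distinct ys" "set xs = set ys"
      using assms(4,5) by (auto simp: linear_extension_def)
    show "sorted_wrt (\<lambda>a b. \<not> prec b a) xs" "sorted_wrt (\<lambda>a b. \<not> prec b a) ys"
      using assms(4,5) by (auto intro: le_sorted)
    show "\<forall>x\<in>set xs. \<forall>y\<in>set xs. x \<noteq> y \<longrightarrow> \<not> prec y x \<longrightarrow> \<not> prec x y \<longrightarrow> commute (app x) (app y)"
      using com assms(4) by (auto simp: linear_extension_def)
  qed
  then show ?thesis by (simp add: result_state_def)
qed

end
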